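(* Let $\ell$ be a label, $A,B$ types and $\rho_{11},\rho_{12},\rho_{21},\rho_{22}$ rows such that all concatenations below are defined. If $A \simeq B$, $\rho_{11}\odot\rho_{12} \simeq \rho_{21}\odot\rho_{22}$ and $\ell \notin \mathit{dom}(\rho_{11})\cup\mathit{dom}(\rho_{21})$, then $\rho_{11}\odot(\ell{:}A;\cdot)\odot\rho_{12} \simeq \rho_{21}\odot(\ell{:}B;\cdot)\odot\rho_{22}$.
   Context: Types and rows share one grammar: $A,B,C,\rho ::= X \mid \alpha \mid \star \mid \iota \mid A\to B \mid \forall X{:}K.\,A \mid [\rho] \mid \langle\rho\rangle \mid \cdot \mid \ell{:}A;\rho$, where $X$ ranges over type variables (bound by $\forall$), $\alpha$ over type names, $\star$ is the dynamic type (also serving as the dynamic row), $\iota$ over base types, $[\rho]$ and $\langle\rho\rangle$ are record and variant types, $\cdot$ is the empty row, $\ell$ ranges over labels, and $K\in\{\mathsf T,\mathsf R\}$ is a kind. Types are identified up to renaming of bound variables; $\mathit{ftv}(A)$ is the set of free type variables. Row matching $\rho \triangleright_\ell A,\rho'$ is defined by: $(\ell{:}A;\rho)\triangleright_\ell A,\rho$; if $\ell'\neq\ell$ and $\rho\triangleright_\ell A,\rho'$ then $(\ell'{:}B;\rho)\triangleright_\ell A,(\ell'{:}B;\rho')$; and $\star\triangleright_\ell \star,\star$. $\mathbf{QPoly}(A)$ holds iff $A$ is not of the form $\forall X{:}K.\,B$ and $\star$ occurs in $A$. Row concatenation $\rho_1\odot\rho_2$ is defined only when $\rho_1=\ell_1{:}A_1;\dots;\ell_n{:}A_n;\cdot$,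 and then equals $\ell_1{:}A_1;\dots;\ell_n{:}A_n;\rho_2$. $\mathit{dom}(\rho)$ is the set of labels in the top-level label prefix of $\rho$. Consistency $\simeq$ is defined inductively: $A\simeq A$; $\star\simeq A$; $A\simeq\star$; $A_1\to A_2\simeq B_1\to B_2$ if $A_1\simeq B_1$ and $A_2\simeq B_2$; $\forall X{:}K.A\simeq\forall X{:}K.B$ if $A\simeq B$; $\forall X{:}K.A\simeq B$ if $\mathbf{QPoly}(B)$, $X\notin\mathit{ftv}(B)$ and $A\simeq B$; $A\simeq\forall X{:}K.B$ if $\mathbf{QPoly}(A)$, $X\notin\mathit{ftv}(A)$ and $A\simeq B$; $[\rho_1]\simeq[\rho_2]$ and $\langle\rho_1\rangle\simeq\langle\rho_2\rangle$ if $\rho_1\simeq\rho_2$; $\ell{:}A;\rho_1\simeq B$ if $B\triangleright_\ell B',\rho_2$, $A\simeq B'$ and $\rho_1\simeq\rho_2$; $A\simeq \ell{:}B;\rho_2$ if $A\triangleright_\ell A',\rho_1$, $A'\simeq B$ and $\rho_1\simeq\rho_2$. *)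

theory Defs
  imports Main
begin

datatype kind = KT | KR

text \<open>Types and rows share one grammar. Type variables bound by forall are
represented by de Bruijn indices (so types are identified up to renaming of
bound variables); 'n are type names, 'b base types, 'l labels.\<close>
datatype ('n, 'b, 'l) ty =
    TVar nat
  | TName 'n
  | Dyn
  | Base 'b
  | Fun "('n, 'b, 'l) ty" "('n, 'b, 'l) ty"
  | Forall kind "('n, 'b, 'l) ty"
  | Record "('n, 'b, 'l) ty"
  | Variant "('n, 'b, 'l) ty"
  | REmpty
  | RCons 'l "('n, 'b, 'l) ty" "('n, 'b, 'l) ty"

fun shift :: "nat \<Rightarrow> ('n, 'b, 'l) ty \<Rightarrow> ('n, 'b, 'l) ty" where
  "shift c (TVar n) = (if n < c then TVar n else TVar (Suc n))"
| "shift c (TName a) = TName a"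
| "shift c Dyn = Dyn"
| "shift c (Base i) = Base i"
| "shift c (Fun A B) = Fun (shift c A) (shift c B)"
| "shift c (Forall K A) = Forall K (shift (Suc c) A)"
| "shift c (Record r) = Record (shift c r)"
| "shift c (Variant r) = Variant (shift c r)"
| "shift c REmpty = REmpty"
| "shift c (RCons l A r) = RCons l (shift c A) (shift c r)"

inductive rmatch :: "('n, 'b, 'l) ty \<Rightarrow> 'l \<Rightarrow> ('n, 'b, 'l) ty \<Rightarrow> ('n, 'b, 'l) ty \<Rightarrow> bool" where
  rm_head: "rmatch (RCons l A r) l A r"
| rm_skip: "l' \<noteq> l \<Longrightarrow> rmatch r l A r' \<Longrightarrow> rmatch (RCons l' B r) l A (RCons l' B r')"
| rm_dyn: "rmatch Dyn l Dyn Dyn"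

fun dyn_occurs :: "('n, 'b, 'l) ty \<Rightarrow> bool" where
  "dyn_occurs (TVar n) = False"
| "dyn_occurs (TName a) = False"
| "dyn_occurs Dyn = True"
| "dyn_occurs (Base i) = False"
| "dyn_occurs (Fun A B) = (dyn_occurs A \<or> dyn_occurs B)"
| "dyn_occurs (Forall K A) = dyn_occurs A"
| "dyn_occurs (Record r) = dyn_occurs r"
| "dyn_occurs (Variant r) = dyn_occurs r"
| "dyn_occurs REmpty = False"
| "dyn_occurs (RCons l A r) = (dyn_occurs A \<or> dyn_occurs r)"

definition QPoly :: "('n, 'b, 'l) ty \<Rightarrow> bool" where
  "QPoly A \<longleftrightarrow> (\<forall>K B. A \<noteq> Forall K B) \<and> dyn_occurs A"

text \<open>Consistency. In the rules for forall vs. non-forall, the side condition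
X not free in B together with A ~ B becomes A ~ (shift 0 B) in de Bruijn form.\<close>
inductive consistent :: "('n, 'b, 'l) ty \<Rightarrow> ('n, 'b, 'l) ty \<Rightarrow> bool" (infix "\<simeq>" 50) where
  c_refl: "A \<simeq> A"
| c_dynL: "Dyn \<simeq> A"
| c_dynR: "A \<simeq> Dyn"
| c_fun: "A1 \<simeq> B1 \<Longrightarrow> A2 \<simeq> B2 \<Longrightarrow> Fun A1 A2 \<simeq> Fun B1 B2"
| c_all: "A \<simeq> B \<Longrightarrow> Forall K A \<simeq> Forall K B"
| c_allL: "QPoly B \<Longrightarrow> A \<simeq> shift 0 B \<Longrightarrow> Forall K A \<simeq> B"
| c_allR: "QPoly A \<Longrightarrow> shift 0 A \<simeq> B \<Longrightarrow> A \<simeq> Forall K B"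
| c_rec: "r1 \<simeq> r2 \<Longrightarrow> Record r1 \<simeq> Record r2"
| c_var: "r1 \<simeq> r2 \<Longrightarrow> Variant r1 \<simeq> Variant r2"
| c_consL: "rmatch B l B' r2 \<Longrightarrow> A \<simeq> B' \<Longrightarrow> r1 \<simeq> r2 \<Longrightarrow> RCons l A r1 \<simeq> B"
| c_consR: "rmatch A l A' r1 \<Longrightarrow> A' \<simeq> B \<Longrightarrow> r1 \<simeq> r2 \<Longrightarrow> A \<simeq> RCons l B r2"

text \<open>A row is closed if it is a finite label list ending in the empty row;
concatenation is only defined for a closed left argument.\<close>
fun closed_row :: "('n, 'b, 'l) ty \<Rightarrow> bool" where
  "closed_row REmpty = True"
| "closed_row (RCons l A r) = closed_row r"
| "closed_row _ = False"

fun rconcat :: "('n, 'b, 'l) ty \<Rightarrow> ('n, 'b, 'l) ty \<Rightarrow> ('n, 'b, 'l) ty" (infixr "\<odot>" 65) where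
  "rconcat REmpty r2 = r2"
| "rconcat (RCons l A r) r2 = RCons l A (rconcat r r2)"
| "rconcat _ r2 = undefined"

fun rdom :: "('n, 'b, 'l) ty \<Rightarrow> 'l set" where
  "rdom (RCons l A r) = insert l (rdom r)"
| "rdom _ = {}"

end

theory Submission
  imports Defs
begin

fun rlen :: "('n, 'b, 'l) ty \<Rightarrow> nat" where
  "rlen (RCons l A r) = Suc (rlen r)"
| "rlen _ = 0"

lemma rm_concat:
  "closed_row r1 \<Longrightarrow> l \<notin> rdom r1 \<Longrightarrow> rmatch (r1 \<odot> RCons l A r2) l A (r1 \<odot> r2)"
  by (induction r1) (auto intro: rmatch.intros)

lemma rm_inv:
  "rmatch (RCons m D x) k C r \<Longrightarrow> (m = k \<and> C = D \<and> r = x) \<or> (\<exists>t. m \<noteq> k \<and> rmatch x k C t \<and> r = RCons m D t)"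
  by (auto elim: rmatch.cases)

lemma rm_split:
  "closed_row r21 \<Longrightarrow> rmatch (r21 \<odot> r22) k C r \<Longrightarrow> k \<noteq> l \<Longrightarrow>
   (\<exists>r21'. closed_row r21' \<and> rdom r21' \<subseteq> rdom r21 \<and> rlen r21' < rlen r21 \<and> r = r21' \<odot> r22 \<and>
      rmatch (r21 \<odot> RCons l B r22) k C (r21' \<odot> RCons l B r22)) \<or>
   (\<exists>r22'. rmatch r22 k C r22' \<and> r = r21 \<odot> r22' \<and>
      rmatch (r21 \<odot> RCons l B r22) k C (r21 \<odot> RCons l B r22'))"
proof (induction r21 arbitrary: r)
  case REmpty
  then show ?case by (auto intro: rmatch.intros)
next
  case (RCons m D s)
  have "rmatch (RCons m D (s \<odot> r22)) k C r" using RCons.prems by simp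
  from rm_inv[OF this] show ?case
  proof
    assume "m = k \<and> C = D \<and> r = s \<odot> r22"
    then show ?thesis using RCons.prems by (auto intro: rmatch.intros)
  next
    assume "\<exists>t. m \<noteq> k \<and> rmatch (s \<odot> r22) k C t \<and> r = RCons m D t"
    then obtain r' where rm_skip: "m \<noteq> k" "rmatch (s \<odot> r22) k C r'" "r = RCons m D r'" by blast
    from RCons.IH[of r'] RCons.prems rm_skip have
      "(\<exists>r21'. closed_row r21' \<and> rdom r21' \<subseteq> rdom s \<and> rlen r21' < rlen s \<and> r' = r21' \<odot> r22 \<and>
      rmatch (s \<odot> RCons l B r22) k C (r21' \<odot> RCons l B r22)) \<or>
   (\<exists>r22'. rmatch r22 k C r22' \<and> r' = s \<odot> r22' \<and>
      rmatch (s \<odot> RCons l B r22) k C (s \<odot> RCons l B r22'))" by auto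
    then show ?thesis
    proof
      assume "\<exists>r21'. closed_row r21' \<and> rdom r21' \<subseteq> rdom s \<and> rlen r21' < rlen s \<and> r' = r21' \<odot> r22 \<and>
      rmatch (s \<odot> RCons l B r22) k C (r21' \<odot> RCons l B r22)"
      then obtain t where "closed_row t" "rdom t \<subseteq> rdom s" "rlen t < rlen s" "r' = t \<odot> r22"
        "rmatch (s \<odot> RCons l B r22) k C (t \<odot> RCons l B r22)" by blast
      then show ?thesis using rm_skip
        by (intro disjI1 exI[of _ "RCons m D t"]) (auto intro: rmatch.intros)
    next
      assume "\<exists>r22'. rmatch r22 k C r22' \<and> r' = s \<odot> r22' \<and>
      rmatch (s \<odot> RCons l B r22) k C (s \<odot> RCons l B r22')"
      then show ?thesis using rm_skip by (auto intro: rmatch.intros)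
    qed
  qed
qed auto

lemma mainL:
  "rlen r11 + rlen r21 = n \<Longrightarrow> closed_row r11 \<Longrightarrow> closed_row r21 \<Longrightarrow> A \<simeq> B \<Longrightarrow>
   r11 \<odot> r12 \<simeq> r21 \<odot> r22 \<Longrightarrow> l \<notin> rdom r11 \<union> rdom r21 \<Longrightarrow>
   r11 \<odot> RCons l A r12 \<simeq> r21 \<odot> RCons l B r22"
proof (induction n arbitrary: r11 r21 r12 r22 rule: less_induct)
  case (less n)
  show ?case
  proof (cases "r11 = REmpty")
    case True
    then show ?thesis using less.prems rm_concat[of r21 l B r22]
      by (auto intro: c_consL)
  next
    case F1: False
    show ?thesis
    proof (cases "r21 = REmpty")
      case True
      then show ?thesis using less.prems rm_concat[of r11 l A r12]
        by (auto intro: c_consR)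
    next
      case F2: False
      from F1 less.prems obtain l1 A1 s1 where r11: "r11 = RCons l1 A1 s1"
        by (cases r11) auto
      from F2 less.prems obtain l2 B2 s2 where r21: "r21 = RCons l2 B2 s2"
        by (cases r21) auto
      have cs1: "closed_row s1" and cs2: "closed_row s2" using less.prems r11 r21 by auto
      have nl1: "l1 \<noteq> l" and nl2: "l2 \<noteq> l" and ns1: "l \<notin> rdom s1" and ns2: "l \<notin> rdom s2"
        using less.prems r11 r21 by auto
      have hyp: "RCons l1 A1 (s1 \<odot> r12) \<simeq> RCons l2 B2 (s2 \<odot> r22)"
        using less.prems r11 r21 by simp
      from hyp show ?thesis
      proof (cases rule: consistent.cases)
        case c_refl
        have "s1 \<odot> RCons l A r12 \<simeq> s2 \<odot> RCons l B r22"
          using less.IH[of "rlen s1 + rlen s2" s1 s2 r12 r22] less.prems r11 r21 cs1 cs2 ns1 ns2 c_refl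
          by (auto intro: consistent.c_refl)
        then show ?thesis using r11 r21 c_refl
          by (auto intro!: consistent.c_consL rmatch.intros consistent.c_refl)
      next
        case (c_consL B' r2)
        from rm_split[of "RCons l2 B2 s2" r22 l1 B' r2 l B] c_consL less.prems r21 nl1
        consider (a) t where "closed_row t" "rdom t \<subseteq> rdom r21" "rlen t < rlen r21" "r2 = t \<odot> r22"
            "rmatch (r21 \<odot> RCons l B r22) l1 B' (t \<odot> RCons l B r22)"
          | (b) r22' where "rmatch r22 l1 B' r22'" "r2 = r21 \<odot> r22'"
            "rmatch (r21 \<odot> RCons l B r22) l1 B' (r21 \<odot> RCons l B r22')"
          by auto
        then show ?thesis
        proof cases
          case a
          have "s1 \<odot> RCons l A r12 \<simeq> t \<odot> RCons l B r22"
            using less.IH[of "rlen s1 + rlen t" s1 t r12 r22] less.prems r11 cs1 ns1 c_consL a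
            by auto
          then show ?thesis using a c_consL r11 by (auto intro: consistent.c_consL)
        next
          case b
          have "s1 \<odot> RCons l A r12 \<simeq> r21 \<odot> RCons l B r22'"
            using less.IH[of "rlen s1 + rlen r21" s1 r21 r12 r22'] less.prems r11 cs1 ns1 c_consL b
            by auto
          then show ?thesis using b c_consL r11 by (auto intro: consistent.c_consL)
        qed
      next
        case (c_consR A' r1)
        from rm_split[of "RCons l1 A1 s1" r12 l2 A' r1 l A] c_consR less.prems r11 nl2
        consider (a) t where "closed_row t" "rdom t \<subseteq> rdom r11" "rlen t < rlen r11" "r1 = t \<odot> r12"
            "rmatch (r11 \<odot> RCons l A r12) l2 A' (t \<odot> RCons l A r12)"
          | (b) r12' where "rmatch r12 l2 A' r12'" "r1 = r11 \<odot> r12'"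
            "rmatch (r11 \<odot> RCons l A r12) l2 A' (r11 \<odot> RCons l A r12')"
          by auto
        then show ?thesis
        proof cases
          case a
          have "t \<odot> RCons l A r12 \<simeq> s2 \<odot> RCons l B r22"
            using less.IH[of "rlen t + rlen s2" t s2 r12 r22] less.prems r21 cs2 ns2 c_consR a
            by auto
          then show ?thesis using a c_consR r21 by (auto intro: consistent.c_consR)
        next
          case b
          have "r11 \<odot> RCons l A r12' \<simeq> s2 \<odot> RCons l B r22"
            using less.IH[of "rlen r11 + rlen s2" r11 s2 r12' r22] less.prems r21 cs2 ns2 c_consR b
            by auto
          then show ?thesis using b c_consR r21 by (auto intro: consistent.c_consR)
        qed
      qed
    qed
  qed
qed

theorem mainTheorem10:
  fixes l :: 'l and A B r11 r12 r21 r22 :: "('n, 'b, 'l) ty"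
  assumes "closed_row r11" and "closed_row r21"
    and "A \<simeq> B"
    and "r11 \<odot> r12 \<simeq> r21 \<odot> r22"
    and "l \<notin> rdom r11 \<union> rdom r21"
  shows "r11 \<odot> RCons l A REmpty \<odot> r12 \<simeq> r21 \<odot> RCons l B REmpty \<odot> r22"
  using mainL[OF refl assms] by simp

end
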